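(* Let $A=\mathrm{diag}(\mathbf{a})$ with $\mathbf{a}\in\mathbb{R}^n$, $\beta>0$, $f(\mathbf{z})=\frac12\mathbf{z}^*A\mathbf{z}+\frac{\beta}{2}\sum_k|z_k|^4$. A point $\mathbf{z}\in\mathbb{CS}^{n-1}$ is a local minimizer of $f$ on $\mathbb{CS}^{n-1}$ if and only if $\mathbf{z}$ is stationary and $H=A+2\beta\,\mathrm{diag}(|\mathbf{z}|^2)-2\lambda I\succeq0$, where $\lambda=\frac12\mathbf{z}^*A\mathbf{z}+\beta\|\mathbf{z}\|_4^4$. Moreover, every local minimizer $\mathbf{z}$ satisfies $z_k=\sqrt{u_k}\,e^{i\theta_k}$ for some $\theta_k\in[0,2\pi)$, $k\in[n]$, where $\mathbf{u}=\mathcal{P}_{\Delta_n}(-\mathbf{a}/(2\beta))$.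
   Context: $\mathbb{CS}^{n-1}$ is the unit sphere of $\mathbb{C}^n$; stationarity means $[A+2\beta\,\mathrm{diag}(|\mathbf{z}|^2)]\mathbf{z}=2\lambda\mathbf{z}$ with $|\mathbf{z}|^2=(|z_1|^2,\dots,|z_n|^2)$. $\Delta_n=\{\mathbf{u}\in\mathbb{R}^n:u_k\ge0,\ \sum_ku_k=1\}$ is the simplex and $\mathcal{P}_{\Delta_n}$ is the Euclidean projection onto it. *)

theory Defs
  imports "HOL-Analysis.Analysis"
begin

definition diag_mat :: "'a::zero ^ 'n \<Rightarrow> 'a ^ 'n ^ 'n" where
  "diag_mat v = (\<chi> i j. if i = j then v $ i else 0)"

definition quad_form :: "complex ^ 'n ^ 'n \<Rightarrow> complex ^ 'n \<Rightarrow> complex" where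
  "quad_form M z = (\<Sum>i\<in>UNIV. cnj (z $ i) * (M *v z) $ i)"

definition psd :: "complex ^ 'n ^ 'n \<Rightarrow> bool" where
  "psd H \<longleftrightarrow> (\<forall>x. Im (quad_form H x) = 0 \<and> 0 \<le> Re (quad_form H x))"

definition Amat :: "real ^ 'n \<Rightarrow> complex ^ 'n ^ 'n" where
  "Amat a = diag_mat (\<chi> k. complex_of_real (a $ k))"

definition absq_diag :: "complex ^ 'n \<Rightarrow> complex ^ 'n ^ 'n" where
  "absq_diag z = diag_mat (\<chi> k. complex_of_real ((norm (z $ k))\<^sup>2))"

definition energy :: "real ^ 'n \<Rightarrow> real \<Rightarrow> complex ^ 'n \<Rightarrow> real" where
  "energy a \<beta> z = Re (quad_form (Amat a) z) / 2 + \<beta> / 2 * (\<Sum>k\<in>UNIV. (norm (z $ k)) ^ 4)"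

definition lam :: "real ^ 'n \<Rightarrow> real \<Rightarrow> complex ^ 'n \<Rightarrow> real" where
  "lam a \<beta> z = Re (quad_form (Amat a) z) / 2 + \<beta> * (\<Sum>k\<in>UNIV. (norm (z $ k)) ^ 4)"

definition csphere :: "(complex ^ 'n) set" where
  "csphere = {z. norm z = 1}"

definition stationary :: "real ^ 'n \<Rightarrow> real \<Rightarrow> complex ^ 'n \<Rightarrow> bool" where
  "stationary a \<beta> z \<longleftrightarrow> z \<in> csphere \<and>
     (\<exists>lm::real. (Amat a + (2 * \<beta>) *\<^sub>R absq_diag z) *v z
                  = (2 * lm) *\<^sub>R z)"

definition local_min_on_sphere :: "real ^ 'n \<Rightarrow> real \<Rightarrow> complex ^ 'n \<Rightarrow> bool" where
  "local_min_on_sphere a \<beta> z \<longleftrightarrow> z \<in> csphere \<and>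
     (\<exists>e>0. \<forall>w\<in>csphere. dist w z < e \<longrightarrow> energy a \<beta> z \<le> energy a \<beta> w)"

definition simplex_n :: "(real ^ 'n) set" where
  "simplex_n = {u. (\<forall>k. 0 \<le> u $ k) \<and> (\<Sum>k\<in>UNIV. u $ k) = 1}"

definition proj_simplex :: "real ^ 'n \<Rightarrow> real ^ 'n" where
  "proj_simplex x = closest_point simplex_n x"

end

theory Submission
  imports Defs
begin

definition G :: "real ^ 'n \<Rightarrow> real \<Rightarrow> real ^ 'n \<Rightarrow> real" where
  "G a \<beta> u = (\<Sum>k\<in>UNIV. a$k * u$k) / 2 + \<beta> / 2 * (\<Sum>k\<in>UNIV. (u$k)\<^sup>2)"

definition uu :: "complex ^ 'n \<Rightarrow> real ^ 'n" where
  "uu z = (\<chi> k. (cmod (z$k))\<^sup>2)"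

definition DD :: "real ^ 'n \<Rightarrow> real \<Rightarrow> real ^ 'n \<Rightarrow> real ^ 'n \<Rightarrow> real" where
  "DD a \<beta> u v = (\<Sum>k\<in>UNIV. (a$k/2 + \<beta> * u$k) * (v$k - u$k))"

lemma mv_diag: "(diag_mat v *v x) $ i = v $ i * x $ i"
proof -
  have "(\<Sum>j\<in>UNIV. (if i = j then v$i else 0) * x$j) = (\<Sum>j\<in>UNIV. if i = j then v$i * x$j else 0)"
    by (rule sum.cong) auto
  then show ?thesis by (simp add: diag_mat_def matrix_vector_mult_def)
qed

lemma quad_diag: "quad_form (diag_mat v) x = (\<Sum>i\<in>UNIV. v$i * of_real((cmod (x$i))\<^sup>2))"
  unfolding quad_form_def mv_diag complex_norm_square
  by (rule sum.cong) (auto simp: algebra_simps)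

lemma quadA: "Re (quad_form (Amat a) z) = (\<Sum>k\<in>UNIV. a$k * (uu z)$k)"
  unfolding Amat_def quad_diag uu_def by simp

lemma energy_eq: "energy a \<beta> z = G a \<beta> (uu z)"
  unfolding energy_def G_def quadA
  by (simp add: uu_def flip: power_mult)

lemma lam_eq: "lam a \<beta> z = (\<Sum>k\<in>UNIV. a$k * (uu z)$k) / 2 + \<beta> * (\<Sum>k\<in>UNIV. ((uu z)$k)\<^sup>2)"
  unfolding lam_def quadA
  by (simp add: uu_def flip: power_mult)

lemma sphere_iff: "z \<in> csphere \<longleftrightarrow> (\<Sum>k\<in>UNIV. (uu z)$k) = 1"
  unfolding csphere_def norm_vec_def L2_set_def uu_def by simp

lemma uu_simplex: "z \<in> csphere \<Longrightarrow> uu z \<in> simplex_n"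
  unfolding simplex_n_def sphere_iff by (simp add: uu_def)

lemma H_diag: "Amat a + c *\<^sub>R absq_diag z - d *\<^sub>R mat 1
   = diag_mat (\<chi> k. complex_of_real (a$k + c * (uu z)$k - d))"
  by (simp add: vec_eq_iff Amat_def absq_diag_def diag_mat_def mat_def uu_def)
     (simp add: scaleR_conv_of_real)

lemma M_diag: "Amat a + c *\<^sub>R absq_diag z
   = diag_mat (\<chi> k. complex_of_real (a$k + c * (uu z)$k))"
  by (simp add: vec_eq_iff Amat_def absq_diag_def diag_mat_def uu_def)
     (simp add: scaleR_conv_of_real)

lemma G_diff: "G a \<beta> v - G a \<beta> u = DD a \<beta> u v + \<beta>/2 * (\<Sum>k\<in>UNIV. (v$k - u$k)\<^sup>2)"
proof -
  have "G a \<beta> v - G a \<beta> u = (\<Sum>k\<in>UNIV. (a$k * v$k/2 + \<beta>/2 * (v$k)\<^sup>2) - (a$k * u$k/2 + \<beta>/2 * (u$k)\<^sup>2))"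
    unfolding G_def by (simp add: sum_subtractf sum.distrib sum_distrib_left sum_divide_distrib)
  also have "\<dots> = (\<Sum>k\<in>UNIV. (a$k/2 + \<beta> * u$k) * (v$k - u$k) + \<beta>/2 * (v$k - u$k)\<^sup>2)"
    by (rule sum.cong) (auto simp: field_simps power2_eq_square)
  finally show ?thesis unfolding DD_def by (simp add: sum.distrib sum_distrib_left)
qed

lemma closed_simplex: "closed (simplex_n :: (real^'n) set)"
  unfolding simplex_n_def Collect_conj_eq
  by (intro closed_Int closed_Collect_all closed_Collect_le closed_Collect_eq continuous_intros)

lemma convex_simplex: "convex (simplex_n :: (real^'n) set)"
  unfolding simplex_n_def convex_def
  by (auto simp: sum.distrib simp flip: sum_distrib_left)


lemma simplex_mem: "u \<in> simplex_n \<longleftrightarrow> (\<forall>k. 0 \<le> u$k) \<and> (\<Sum>k\<in>UNIV. u$k) = 1"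
  unfolding simplex_n_def by simp

lemma sum_c_u:
  assumes "u \<in> simplex_n" "\<forall>k. 0 < u$k \<longrightarrow> c k = (\<mu>::real)"
  shows "(\<Sum>k\<in>UNIV. c k * u$k) = \<mu>"
proof -
  have "(\<Sum>k\<in>UNIV. c k * u$k) = (\<Sum>k\<in>UNIV. \<mu> * u$k)"
  proof (rule sum.cong)
    fix k
    show "c k * u$k = \<mu> * u$k" using assms unfolding simplex_mem
      by (cases "u$k = 0") (auto simp: order_le_less)
  qed simp
  also have "\<dots> = \<mu>" using assms unfolding simplex_mem by (simp flip: sum_distrib_left)
  finally show ?thesis .
qed

lemma P_imp_min:
  assumes "\<beta> > 0" "\<forall>v\<in>simplex_n. 0 \<le> DD a \<beta> u v" "v \<in> simplex_n"
  shows "G a \<beta> u \<le> G a \<beta> v"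
proof -
  have "0 \<le> \<beta>/2 * (\<Sum>k\<in>UNIV. (v$k - u$k)\<^sup>2)" using assms(1) by (intro mult_nonneg_nonneg sum_nonneg) auto
  then show ?thesis using G_diff[of a \<beta> v u] assms(2,3) by auto
qed

lemma DD_alt: "DD a \<beta> u v = (\<Sum>k\<in>UNIV. (a$k/2 + \<beta> * u$k) * v$k) - (\<Sum>k\<in>UNIV. (a$k/2 + \<beta> * u$k) * u$k)"
  unfolding DD_def by (simp only: right_diff_distrib sum_subtractf)

lemma P_imp_KKT:
  assumes "u \<in> simplex_n" "\<forall>v\<in>simplex_n. 0 \<le> DD a \<beta> u v"
  defines "\<mu> \<equiv> (\<Sum>k\<in>UNIV. (a$k/2 + \<beta> * u$k) * u$k)"
  shows "\<forall>k. \<mu> \<le> a$k/2 + \<beta> * u$k \<and> (0 < u$k \<longrightarrow> a$k/2 + \<beta> * u$k = \<mu>)"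
proof -
  have ge: "\<mu> \<le> a$j/2 + \<beta> * u$j" for j
  proof -
    define v where "v = (\<chi> k. if k = j then 1 else (0::real))"
    have "v \<in> simplex_n" unfolding simplex_mem v_def by simp
    then have "0 \<le> DD a \<beta> u v" using assms by auto
    moreover have "(\<Sum>k\<in>UNIV. (a$k/2 + \<beta> * u$k) * v$k) = a$j/2 + \<beta> * u$j"
      unfolding v_def by (simp add: if_distrib cong: if_cong)
    ultimately show ?thesis unfolding DD_alt \<mu>_def by simp
  qed
  have "(\<Sum>k\<in>UNIV. (a$k/2 + \<beta> * u$k - \<mu>) * u$k) = \<mu> - \<mu> * (\<Sum>k\<in>UNIV. u$k)"
    by (simp only: left_diff_distrib sum_subtractf sum_distrib_left \<mu>_def[symmetric])
  also have "\<dots> = 0" using assms(1) unfolding simplex_mem by simp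
  finally have z: "(\<Sum>k\<in>UNIV. (a$k/2 + \<beta> * u$k - \<mu>) * u$k) = 0" .
  have nn: "\<forall>k\<in>UNIV. 0 \<le> (a$k/2 + \<beta> * u$k - \<mu>) * u$k"
    using ge assms(1) unfolding simplex_mem by auto
  have "\<forall>k\<in>UNIV. (a$k/2 + \<beta> * u$k - \<mu>) * u$k = 0"
    using sum_nonneg_eq_0_iff[of UNIV "\<lambda>k. (a$k/2 + \<beta> * u$k - \<mu>) * u$k"] nn z by simp
  then show ?thesis using ge by auto
qed

lemma KKT_imp_P:
  assumes "u \<in> simplex_n" "\<forall>k. \<mu> \<le> a$k/2 + \<beta> * u$k \<and> (0 < u$k \<longrightarrow> a$k/2 + \<beta> * u$k = \<mu>)"
    "v \<in> simplex_n"
  shows "0 \<le> DD a \<beta> u v"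
proof -
  have "(\<Sum>k\<in>UNIV. (a$k/2 + \<beta> * u$k) * u$k) = \<mu>"
    using sum_c_u[OF assms(1), of "\<lambda>k. a$k/2 + \<beta> * u$k" \<mu>] assms(2) by auto
  moreover have "(\<Sum>k\<in>UNIV. \<mu> * v$k) \<le> (\<Sum>k\<in>UNIV. (a$k/2 + \<beta> * u$k) * v$k)"
    using assms(2,3) unfolding simplex_mem by (intro sum_mono mult_right_mono) auto
  moreover have "(\<Sum>k\<in>UNIV. \<mu> * v$k) = \<mu>" using assms(3) unfolding simplex_mem
    by (simp flip: sum_distrib_left)
  ultimately show ?thesis unfolding DD_alt by simp
qed


lemma psd_diag:
  fixes h :: "'n::finite \<Rightarrow> real"
  shows "psd (diag_mat (\<chi> k. complex_of_real (h k))) \<longleftrightarrow> (\<forall>k. 0 \<le> h k)"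
proof
  assume p: "psd (diag_mat (\<chi> k. complex_of_real (h k)))"
  show "\<forall>k. 0 \<le> h k"
  proof
    fix k
    define x :: "complex^'n" where "x = (\<chi> j. if j = k then 1 else (0::complex))"
    have "quad_form (diag_mat (\<chi> k. complex_of_real (h k))) x = complex_of_real (h k)"
    proof -
      have "(cmod (x$i))\<^sup>2 = (if i = k then 1 else 0)" for i by (simp add: x_def)
      then have "(\<Sum>i\<in>UNIV. (\<chi> k. complex_of_real (h k))$i * complex_of_real ((cmod (x$i))\<^sup>2))
         = (\<Sum>i\<in>UNIV. if i = k then complex_of_real (h k) else 0)"
        by (intro sum.cong) auto
      then show ?thesis unfolding quad_diag by simp
    qed
    then show "0 \<le> h k" using p unfolding psd_def by (metis Re_complex_of_real)
  qed
next
  assume h: "\<forall>k. 0 \<le> h k"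
  show "psd (diag_mat (\<chi> k. complex_of_real (h k)))"
    unfolding psd_def
  proof
    fix x
    have "quad_form (diag_mat (\<chi> k. complex_of_real (h k))) x
        = complex_of_real (\<Sum>i\<in>UNIV. h i * (cmod (x$i))\<^sup>2)"
      unfolding quad_diag by simp
    moreover have "0 \<le> (\<Sum>i\<in>UNIV. h i * (cmod (x$i))\<^sup>2)"
      using h by (intro sum_nonneg mult_nonneg_nonneg) auto
    ultimately show "Im (quad_form (diag_mat (\<chi> k. complex_of_real (h k))) x) = 0 \<and>
          0 \<le> Re (quad_form (diag_mat (\<chi> k. complex_of_real (h k))) x)" by simp
  qed
qed

lemma uu_pos: "0 < (uu z)$k \<longleftrightarrow> z$k \<noteq> 0"
  unfolding uu_def by simp

lemma uu_nonneg: "0 \<le> (uu z)$k"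
  unfolding uu_def by simp

lemma lam_c: "lam a \<beta> z = (\<Sum>k\<in>UNIV. (a$k/2 + \<beta> * (uu z)$k) * (uu z)$k)"
  unfolding lam_eq by (simp add: sum_divide_distrib sum_distrib_left algebra_simps power2_eq_square flip: sum.distrib)

lemma stat_iff: "stationary a \<beta> z \<longleftrightarrow> z \<in> csphere \<and>
   (\<exists>lm::real. \<forall>k. complex_of_real (a$k + 2*\<beta> * (uu z)$k) * z$k = complex_of_real (2 * lm) * z$k)"
  unfolding stationary_def M_diag vec_eq_iff mv_diag vector_scaleR_component by (simp add: scaleR_conv_of_real)

lemma stat_psd_iff:
  assumes "z \<in> csphere"
  shows "(stationary a \<beta> z \<and> psd (Amat a + (2*\<beta>) *\<^sub>R absq_diag z - (2 * lam a \<beta> z) *\<^sub>R mat 1))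
     \<longleftrightarrow> (\<exists>\<mu>. \<forall>k. \<mu> \<le> a$k/2 + \<beta>*(uu z)$k \<and> (0 < (uu z)$k \<longrightarrow> a$k/2 + \<beta>*(uu z)$k = \<mu>))"
    (is "?L \<longleftrightarrow> ?R")
proof
  assume L: ?L
  then obtain lm where lm: "\<forall>k. complex_of_real (a$k + 2*\<beta> * (uu z)$k) * z$k = complex_of_real (2 * lm) * z$k"
    unfolding stat_iff by blast
  have eq: "a$k/2 + \<beta>*(uu z)$k = lm" if "0 < (uu z)$k" for k
  proof -
    have "z$k \<noteq> 0" using that uu_pos by blast
    then have "complex_of_real (a$k + 2*\<beta> * (uu z)$k) = complex_of_real (2 * lm)" using lm[rule_format, of k]
      by (simp only: mult_cancel_right) simp
    then have "a$k + 2*\<beta> * (uu z)$k = 2 * lm" by (simp only: of_real_eq_iff)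
    then show ?thesis by simp
  qed
  have "lam a \<beta> z = lm" unfolding lam_c
    using sum_c_u[OF uu_simplex[OF assms], of "\<lambda>k. a$k/2 + \<beta>*(uu z)$k" lm] eq by auto
  moreover have "\<forall>k. 0 \<le> a$k + 2*\<beta> * (uu z)$k - 2 * lam a \<beta> z"
    using L unfolding H_diag psd_diag by auto
  ultimately have "\<forall>k. lm \<le> a$k/2 + \<beta>*(uu z)$k"
  proof (intro allI)
    fix k assume "lam a \<beta> z = lm" "\<forall>k. 0 \<le> a$k + 2*\<beta> * (uu z)$k - 2 * lam a \<beta> z"
    then have "0 \<le> a$k + 2*\<beta> * (uu z)$k - 2 * lm" by auto
    then show "lm \<le> a$k/2 + \<beta>*(uu z)$k" by linarith
  qed
  then show ?R using eq by blast
next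
  assume ?R
  then obtain \<mu> where mu: "\<forall>k. \<mu> \<le> a$k/2 + \<beta>*(uu z)$k \<and> (0 < (uu z)$k \<longrightarrow> a$k/2 + \<beta>*(uu z)$k = \<mu>)"
    by blast
  have lm: "lam a \<beta> z = \<mu>" unfolding lam_c
    using sum_c_u[OF uu_simplex[OF assms], of "\<lambda>k. a$k/2 + \<beta>*(uu z)$k" \<mu>] mu by auto
  have "complex_of_real (a$k + 2*\<beta> * (uu z)$k) * z$k = complex_of_real (2 * \<mu>) * z$k" for k
  proof (cases "z$k = 0")
    case False
    then have "a$k/2 + \<beta>*(uu z)$k = \<mu>" using mu uu_pos by blast
    then have "a$k + 2*\<beta> * (uu z)$k = 2 * \<mu>" by simp
    then show ?thesis by simp
  qed simp
  then have "stationary a \<beta> z" unfolding stat_iff using assms by blast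
  moreover have "psd (Amat a + (2*\<beta>) *\<^sub>R absq_diag z - (2 * lam a \<beta> z) *\<^sub>R mat 1)"
    unfolding H_diag psd_diag lm
  proof
    fix k show "0 \<le> a$k + 2*\<beta> * (uu z)$k - 2 * \<mu>" using mu[rule_format, of k] by linarith
  qed
  ultimately show ?L by blast
qed


lemma localmin_P:
  assumes "\<beta> > 0" "local_min_on_sphere a \<beta> z" "v \<in> simplex_n"
  shows "0 \<le> DD a \<beta> (uu z) v"
proof (rule ccontr)
  assume "\<not> ?thesis"
  then have Dneg: "DD a \<beta> (uu z) v < 0" by simp
  from assms(2) obtain e where e: "e > 0" "\<forall>w\<in>csphere. dist w z < e \<longrightarrow> energy a \<beta> z \<le> energy a \<beta> w"
    and zs: "z \<in> csphere" unfolding local_min_on_sphere_def by blast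
  define u where "u = uu z"
  define s where "s k = (if z$k = 0 then 1 else sgn (z$k))" for k
  define ut where "ut t = (\<chi> k. u$k + t * (v$k - u$k))" for t :: real
  define w where "w t = (\<chi> k. complex_of_real (sqrt (ut t $ k)) * s k)" for t
  have s1: "cmod (s k) = 1" for k by (simp add: s_def norm_sgn)
  have w0: "w 0 = z"
  proof -
    have "complex_of_real (sqrt (u $ k)) * s k = z$k" for k
    proof (cases "z$k = 0")
      case True then show ?thesis by (simp add: u_def uu_def s_def)
    next
      case False
      then show ?thesis by (simp add: u_def uu_def s_def sgn_div_norm scaleR_conv_of_real field_simps)
    qed
    then show ?thesis unfolding w_def ut_def by (simp add: vec_eq_iff)
  qed
  have cont: "continuous_on UNIV w" unfolding w_def ut_def by (intro continuous_intros)
  then have "(w \<longlongrightarrow> w 0) (at 0)" unfolding continuous_on_def by simp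
  then have "(w \<longlongrightarrow> z) (at_right 0)" using w0 tendsto_mono[OF at_le[of "{0<..}" UNIV]] by simp
  then have ev1: "eventually (\<lambda>t. dist (w t) z < e) (at_right 0)" using tendstoD e(1) by blast
  define D where "D = DD a \<beta> u v"
  define Q where "Q = (\<Sum>k\<in>UNIV. (v$k - u$k)\<^sup>2)"
  define K where "K = \<beta>/2 * Q"
  have "((\<lambda>t. t * K) \<longlongrightarrow> 0) (at_right (0::real))"
    using tendsto_mult_left_zero[OF tendsto_ident_at[of 0 "{0<..}"], of K] by simp
  then have "((\<lambda>t. K * t) \<longlongrightarrow> 0) (at_right (0::real))" by (simp add: mult.commute)
  then have ev2: "eventually (\<lambda>t. K * t < - D) (at_right 0)"
    using Dneg unfolding D_def u_def by (intro order_tendstoD(2)) auto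
  have ev3: "eventually (\<lambda>t. t < 1) (at_right (0::real))"
    unfolding eventually_at_right_field by (intro exI[of _ 1]) auto
  have "eventually (\<lambda>t. dist (w t) z < e \<and> K * t < - D \<and> t < 1) (at_right 0)"
    using ev1 ev2 ev3 by (intro eventually_conj)
  then obtain b where b: "b > 0" "\<forall>y>0. y < b \<longrightarrow> dist (w y) z < e \<and> K * y < - D \<and> y < 1"
    unfolding eventually_at_right_field by blast
  define t where "t = b/2"
  have t: "t > 0" "dist (w t) z < e" "K * t < - D" "t < 1"
  proof -
    have "t > 0" "t < b" using b(1) unfolding t_def by auto
    then show "t > 0" "dist (w t) z < e" "K * t < - D" "t < 1" using b(2) by auto
  qed
  have us: "u \<in> simplex_n" unfolding u_def using uu_simplex[OF zs] .
  have utnn: "0 \<le> ut t $ k" for k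
  proof -
    have "0 \<le> (1 - t) * u$k + t * v$k" using us assms(3) t unfolding simplex_mem
      by (intro add_nonneg_nonneg mult_nonneg_nonneg) auto
    then show ?thesis unfolding ut_def by (simp add: algebra_simps)
  qed
  have uw: "uu (w t) = ut t"
    unfolding uu_def w_def vec_eq_iff using utnn by (simp add: norm_mult s1)
  have "(\<Sum>k\<in>UNIV. ut t $ k) = (\<Sum>k\<in>UNIV. u$k) + t * ((\<Sum>k\<in>UNIV. v$k) - (\<Sum>k\<in>UNIV. u$k))"
    unfolding ut_def by (simp add: sum.distrib sum_subtractf flip: sum_distrib_left)
  then have "(\<Sum>k\<in>UNIV. ut t $ k) = 1" using us assms(3) unfolding simplex_mem by simp
  then have ws: "w t \<in> csphere" unfolding sphere_iff uw .
  have "energy a \<beta> z \<le> energy a \<beta> (w t)" using e(2) ws t(2) by blast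
  then have Gle: "G a \<beta> u \<le> G a \<beta> (ut t)" unfolding energy_eq uw u_def .
  have "DD a \<beta> u (ut t) = t * D" unfolding DD_def D_def ut_def
    by (simp add: sum_distrib_left) (rule sum.cong, auto simp: field_simps)
  moreover have "(\<Sum>k\<in>UNIV. (ut t $ k - u$k)\<^sup>2) = t * t * Q" unfolding Q_def ut_def
    by (simp add: sum_distrib_left power_mult_distrib power2_eq_square algebra_simps)
  ultimately have "G a \<beta> (ut t) - G a \<beta> u = t * (D + K * t)"
    using G_diff[of a \<beta> "ut t" u] unfolding K_def by (simp add: algebra_simps)
  moreover have "t * (D + K * t) < 0" using t by (intro mult_pos_neg) auto
  ultimately show False using Gle by linarith
qed


lemma G_dist:
  assumes "\<beta> > 0"
  shows "G a \<beta> v = \<beta>/2 * (dist (\<chi> j. - a$j / (2*\<beta>)) v)\<^sup>2 - \<beta>/2 * (\<Sum>k\<in>UNIV. (a$k / (2*\<beta>))\<^sup>2)"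
proof -
  have "(dist (\<chi> j. - a$j / (2*\<beta>)) v)\<^sup>2 = (\<Sum>k\<in>UNIV. (v$k + a$k/(2*\<beta>))\<^sup>2)"
    unfolding dist_vec_def L2_set_def dist_real_def
    by (simp add: sum_nonneg power2_abs) (rule sum.cong, auto simp: power2_eq_square algebra_simps)
  also have "\<dots> = (\<Sum>k\<in>UNIV. (v$k)\<^sup>2 + a$k * v$k / \<beta> + (a$k/(2*\<beta>))\<^sup>2)"
    using assms by (intro sum.cong) (auto simp: power2_eq_square field_simps)
  also have "\<dots> = (\<Sum>k\<in>UNIV. (v$k)\<^sup>2) + (\<Sum>k\<in>UNIV. a$k * v$k) / \<beta> + (\<Sum>k\<in>UNIV. (a$k/(2*\<beta>))\<^sup>2)"
    by (simp add: sum.distrib sum_divide_distrib)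
  finally have e: "(dist (\<chi> j. - a$j / (2*\<beta>)) v)\<^sup>2 = (\<Sum>k\<in>UNIV. (v$k)\<^sup>2) + (\<Sum>k\<in>UNIV. a$k * v$k) / \<beta> + (\<Sum>k\<in>UNIV. (a$k/(2*\<beta>))\<^sup>2)" .
  show ?thesis unfolding G_def e using assms by (simp add: field_simps)
qed

lemma localmin_proj:
  assumes "\<beta> > 0" "local_min_on_sphere a \<beta> z"
  shows "uu z = proj_simplex (\<chi> j. - a$j / (2*\<beta>))"
  unfolding proj_simplex_def
proof (rule closest_point_unique[OF convex_simplex closed_simplex])
  have zs: "z \<in> csphere" using assms(2) unfolding local_min_on_sphere_def by blast
  then show "uu z \<in> simplex_n" by (rule uu_simplex)
  show "\<forall>y\<in>simplex_n. dist (\<chi> j. - a$j / (2*\<beta>)) (uu z) \<le> dist (\<chi> j. - a$j / (2*\<beta>)) y"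
  proof
    fix y :: "real^'a" assume y: "y \<in> simplex_n"
    have "G a \<beta> (uu z) \<le> G a \<beta> y"
      using P_imp_min[OF assms(1) _ y] localmin_P[OF assms] by blast
    then have "(dist (\<chi> j. - a$j / (2*\<beta>)) (uu z))\<^sup>2 \<le> (dist (\<chi> j. - a$j / (2*\<beta>)) y)\<^sup>2"
      unfolding G_dist[OF assms(1)] using assms(1) by simp
    then show "dist (\<chi> j. - a$j / (2*\<beta>)) (uu z) \<le> dist (\<chi> j. - a$j / (2*\<beta>)) y"
      by (simp add: power2_le_iff_abs_le)
  qed
qed

theorem theorem6:
  fixes a :: "real ^ 'n" and \<beta> :: real
  assumes "\<beta> > 0"
  shows "(\<forall>z \<in> csphere.
            local_min_on_sphere a \<beta> z \<longleftrightarrow>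
              (stationary a \<beta> z \<and>
               psd (Amat a + (2 * \<beta>) *\<^sub>R absq_diag z
                    - (2 * lam a \<beta> z) *\<^sub>R mat 1)))
       \<and> (\<forall>z. local_min_on_sphere a \<beta> z \<longrightarrow>
            (\<exists>\<theta>::'n \<Rightarrow> real. \<forall>k. 0 \<le> \<theta> k \<and> \<theta> k < 2 * pi \<and>
               z $ k = complex_of_real (sqrt (proj_simplex (\<chi> j. - a $ j / (2 * \<beta>)) $ k))
                       * exp (\<i> * complex_of_real (\<theta> k))))"
proof (intro conjI ballI allI impI)
  fix z :: "complex^'n" assume zs: "z \<in> csphere"
  have P_iff: "(\<forall>v\<in>simplex_n. 0 \<le> DD a \<beta> (uu z) v) \<longleftrightarrow>
     (\<exists>\<mu>. \<forall>k. \<mu> \<le> a$k/2 + \<beta>*(uu z)$k \<and> (0 < (uu z)$k \<longrightarrow> a$k/2 + \<beta>*(uu z)$k = \<mu>))"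
    using P_imp_KKT[OF uu_simplex[OF zs]] KKT_imp_P[OF uu_simplex[OF zs]] by blast
  show "local_min_on_sphere a \<beta> z \<longleftrightarrow>
              (stationary a \<beta> z \<and>
               psd (Amat a + (2 * \<beta>) *\<^sub>R absq_diag z
                    - (2 * lam a \<beta> z) *\<^sub>R mat 1))"
    unfolding stat_psd_iff[OF zs] P_iff[symmetric]
  proof
    assume "local_min_on_sphere a \<beta> z"
    then show "\<forall>v\<in>simplex_n. 0 \<le> DD a \<beta> (uu z) v" using localmin_P[OF assms] by blast
  next
    assume P: "\<forall>v\<in>simplex_n. 0 \<le> DD a \<beta> (uu z) v"
    show "local_min_on_sphere a \<beta> z" unfolding local_min_on_sphere_def
    proof (intro conjI exI[of _ 1])
      show "\<forall>w\<in>csphere. dist w z < 1 \<longrightarrow> energy a \<beta> z \<le> energy a \<beta> w"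
        using P_imp_min[OF assms P] uu_simplex unfolding energy_eq by blast
    qed (use zs in auto)
  qed
next
  fix z :: "complex^'n" assume lm: "local_min_on_sphere a \<beta> z"
  have pe: "proj_simplex (\<chi> j. - a $ j / (2 * \<beta>)) = uu z"
    using localmin_proj[OF assms lm] by simp
  show "\<exists>\<theta>::'n \<Rightarrow> real. \<forall>k. 0 \<le> \<theta> k \<and> \<theta> k < 2 * pi \<and>
               z $ k = complex_of_real (sqrt (proj_simplex (\<chi> j. - a $ j / (2 * \<beta>)) $ k))
                       * exp (\<i> * complex_of_real (\<theta> k))"
    unfolding pe
  proof (intro exI[of _ "\<lambda>k. Arg2pi (z$k)"] allI conjI)
    fix k
    show "0 \<le> Arg2pi (z$k)" "Arg2pi (z$k) < 2*pi" by (rule Arg2pi_ge_0, rule Arg2pi_lt_2pi)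
    show "z $ k = complex_of_real (sqrt (uu z $ k)) * exp (\<i> * complex_of_real (Arg2pi (z$k)))"
      unfolding uu_def using Arg2pi_eq[of "z$k"] by simp
  qed
qed

end
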